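(* For every integer $n\ge2$, $$\mathfrak{C}_n(x)=2x^2\,\mathfrak{C}_{n-2}(x)+\left(\frac x4+4x^3\right)\mathfrak{C}'_{n-2}(x)+\left(\frac{x^2}4+x^4\right)\mathfrak{C}''_{n-2}(x),$$ where primes denote derivatives with respect to $x$.
   Context: For $n\ge1$ the central factorial is $x^{[n]}=x\,(x+\tfrac n2-1)(x+\tfrac n2-2)\cdots(x-\tfrac n2+1)$ (a product of $n$ factors), and $x^{[0]}=1$. The central factorial numbers of the second kind $T(n,k)$ ($0\le k\le n$) are defined by $x^n=\sum_{k=0}^n T(n,k)\,x^{[k]}$; equivalently $T(n,k)=\frac1{k!}\sum_{j=0}^k(-1)^j\binom kj\left(\frac k2-j\right)^n$, and $T(n,k)=0$ for $k>n$. The $n$th central Fubini-like polynomial is $\mathfrak{C}_n(x)=\sum_{k=0}^n k!\,T(n,k)\,x^k$. *)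

theory Defs
  imports "HOL-Computational_Algebra.Polynomial"
begin

definition central_fact_T :: "nat \<Rightarrow> nat \<Rightarrow> real" where
  "central_fact_T n k =
     (if k > n then 0
      else (1 / fact k) * (\<Sum>j\<le>k. (-1) ^ j * real (k choose j) * (real k / 2 - real j) ^ n))"

definition central_fubini :: "nat \<Rightarrow> real poly" where
  "central_fubini n = (\<Sum>k\<le>n. monom (fact k * central_fact_T n k) k)"

end

theory Submission
  imports Defs
begin

definition A :: "nat \<Rightarrow> nat \<Rightarrow> real" where
  "A n k = (\<Sum>j\<le>k. (-1) ^ j * real (k choose j) * (real k / 2 - real j) ^ n)"

lemma binom_id: "(Suc (Suc m) choose Suc i) * Suc i * (Suc m - i) = Suc (Suc m) * Suc m * (m choose i)"
proof -
  have "Suc i * (Suc (Suc m) choose Suc i) = Suc (Suc m) * (Suc m choose i)"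
    by (rule Suc_times_binomial)
  moreover have "(Suc m - i) * (Suc m choose i) = Suc m * (m choose i)"
    using binomial_absorb_comp[of "Suc m" i] by simp
  ultimately show ?thesis
    by (metis mult.assoc mult.commute)
qed

lemma aux_lin: "(s::real) * c * ((K - a * b) * y) - K * (s * c * y) = - (s * c * a * b * y)"
  by (simp add: algebra_simps)

lemma aux2: "(C::real) * a * b = K * L * M \<Longrightarrow> - ((-1) * s * C * a * b * Y) = K * L * (s * M * Y)"
proof -
  assume h: "C * a * b = K * L * M"
  have "- ((-1) * s * C * a * b * Y) = s * (C * a * b) * Y" by (simp add: algebra_simps)
  also have "\<dots> = K * L * (s * M * Y)" unfolding h by (simp add: algebra_simps)
  finally show ?thesis .
qed

lemma A_rec: "A (n+2) k = real k ^ 2 / 4 * A n k + real k * (real k - 1) * A n (k - 2)"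
proof -
  have d: "A (n+2) k - real k ^ 2 / 4 * A n k
      = (\<Sum>j\<le>k. - ((-1) ^ j * real (k choose j) * real j * (real k - real j) * (real k / 2 - real j) ^ n))"
    unfolding A_def sum_distrib_left sum_subtractf[symmetric]
  proof (rule sum.cong[OF refl])
    fix j
    have "(real k / 2 - real j) ^ (n+2) = (real k / 2 - real j)^2 * (real k / 2 - real j) ^ n"
      by (simp only: power_add mult.commute)
    moreover have "(real k / 2 - real j)^2 = real k ^ 2 / 4 - real j * (real k - real j)"
      by (simp add: power2_eq_square field_simps)
    ultimately have h: "(real k / 2 - real j) ^ (n+2) = (real k ^ 2 / 4 - real j * (real k - real j)) * (real k / 2 - real j) ^ n" by simp
    show "(-1) ^ j * real (k choose j) * (real k / 2 - real j) ^ (n+2) -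
         real k ^ 2 / 4 * ((-1) ^ j * real (k choose j) * (real k / 2 - real j) ^ n) =
         - ((-1) ^ j * real (k choose j) * real j * (real k - real j) * (real k / 2 - real j) ^ n)"
      unfolding h using aux_lin[of "(-1) ^ j" "real (k choose j)" "real k ^ 2 / 4" "real j" "real k - real j" "(real k / 2 - real j) ^ n"] by simp
  qed
  show ?thesis
  proof (cases "k < 2")
    case True
    then have "k = 0 \<or> k = 1" by auto
    then have "A (n+2) k - real k ^ 2 / 4 * A n k = 0" unfolding d by auto
    then show ?thesis using True \<open>k = 0 \<or> k = 1\<close> by auto
  next
    case False
    then obtain m where k: "k = Suc (Suc m)" by (metis add_2_eq_Suc le_Suc_ex not_less)
    have "(\<Sum>j\<le>k. - ((-1) ^ j * real (k choose j) * real j * (real k - real j) * (real k / 2 - real j) ^ n))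
        = (\<Sum>i\<le>Suc m. - ((-1) ^ Suc i * real (k choose Suc i) * real (Suc i) * (real k - real (Suc i)) * (real k / 2 - real (Suc i)) ^ n))"
      unfolding k by (subst sum.atMost_Suc_shift) simp
    also have "\<dots> = (\<Sum>i\<le>Suc m. real k * (real k - 1) * ((-1) ^ i * real (m choose i) * (real m / 2 - real i) ^ n))"
    proof (rule sum.cong[OF refl])
      fix i assume "i \<in> {..Suc m}"
      then have im: "i \<le> Suc m" by simp
      have e: "real (k choose Suc i) * real (Suc i) * (real k - real (Suc i)) = real k * (real k - 1) * real (m choose i)"
      proof -
        have 1: "real (Suc (Suc m) choose Suc i) * real (Suc i) * real (Suc m - i) = real (Suc (Suc m)) * real (Suc m) * real (m choose i)"
          using arg_cong[OF binom_id[of m i], of real] by (simp only: of_nat_mult)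
        have 2: "real (Suc m - i) = real k - real (Suc i)" using im unfolding k by (simp add: of_nat_diff)
        have 3: "real (Suc m) = real k - 1" unfolding k by simp
        show ?thesis using 1 unfolding 2 3 k[symmetric] .
      qed
      have f: "real k / 2 - real (Suc i) = real m / 2 - real i" unfolding k by (simp add: field_simps)
      show "- ((-1) ^ Suc i * real (k choose Suc i) * real (Suc i) * (real k - real (Suc i)) * (real k / 2 - real (Suc i)) ^ n)
          = real k * (real k - 1) * ((-1) ^ i * real (m choose i) * (real m / 2 - real i) ^ n)"
        unfolding f power_Suc by (rule aux2[OF e])
    qed
    also have "\<dots> = real k * (real k - 1) * A n m"
      unfolding A_def sum_distrib_left by simp
    finally have "A (n+2) k - real k ^ 2 / 4 * A n k = real k * (real k - 1) * A n m" using d by simp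
    moreover have "k - 2 = m" using k by simp
    ultimately show ?thesis by simp
  qed
qed

lemma A_zero: "n < k \<Longrightarrow> A n k = 0"
proof (induction n arbitrary: k rule: nat_less_induct)
  case (1 n)
  show ?case
  proof (cases "n < 2")
    case True
    then have "n = 0 \<or> n = 1" by auto
    then show ?thesis
    proof
      assume "n = 0"
      then show ?thesis using "1.prems" unfolding A_def by (simp add: choose_alternating_sum)
    next
      assume n1: "n = 1"
      have "A n k = real k / 2 * (\<Sum>j\<le>k. (-1) ^ j * real (k choose j))
             - (\<Sum>j\<le>k. (-1) ^ j * real j * real (k choose j))"
        unfolding A_def n1 sum_distrib_left sum_subtractf[symmetric]
        by (rule sum.cong) (auto simp: algebra_simps)
      also have "\<dots> = 0" using "1.prems" n1
        by (simp add: choose_alternating_sum choose_alternating_linear_sum)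
      finally show ?thesis .
    qed
  next
    case False
    then obtain m where n: "n = m + 2" by (metis add.commute le_Suc_ex not_less)
    have "A m k = 0" using "1.IH" "1.prems" n by auto
    moreover have "A m (k - 2) = 0" using "1.IH" "1.prems" n by auto
    ultimately show ?thesis unfolding n A_rec by simp
  qed
qed

lemma coeff_cf: "coeff (central_fubini n) k = A n k"
proof -
  have "coeff (central_fubini n) k = (\<Sum>i\<le>n. if i = k then fact i * central_fact_T n i else 0)"
    unfolding central_fubini_def coeff_sum coeff_monom by (rule sum.cong) auto
  also have "\<dots> = (if k \<le> n then fact k * central_fact_T n k else 0)"
    by (simp add: sum.delta)
  also have "\<dots> = A n k"
    using A_zero[of n k] by (auto simp: central_fact_T_def A_def)
  finally show ?thesis .
qed

theorem theorem6:
  fixes n :: nat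
  assumes "n \<ge> 2"
  shows "central_fubini n =
           smult 2 (monom 1 2) * central_fubini (n - 2)
         + (smult (1/4) (monom 1 1) + smult 4 (monom 1 3)) * pderiv (central_fubini (n - 2))
         + (smult (1/4) (monom 1 2) + monom 1 4) * pderiv (pderiv (central_fubini (n - 2)))"
proof (rule poly_eqI)
  fix k
  obtain m where n: "n = m + 2" using assms by (metis add.commute le_Suc_ex add_2_eq_Suc' le_add_diff_inverse2)
  have nm: "n - 2 = m" using n by simp
  show "coeff (central_fubini n) k = coeff (smult 2 (monom 1 2) * central_fubini (n - 2)
         + (smult (1/4) (monom 1 1) + smult 4 (monom 1 3)) * pderiv (central_fubini (n - 2))
         + (smult (1/4) (monom 1 2) + monom 1 4) * pderiv (pderiv (central_fubini (n - 2)))) k"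
    unfolding nm coeff_cf n A_rec
    apply (simp add: smult_monom distrib_right coeff_monom_mult coeff_pderiv coeff_cf)
    apply (cases "k < 4")
     apply (subgoal_tac "k=0 \<or> k=1 \<or> k=2 \<or> k=3")
      apply (elim disjE; simp add: field_simps numeral_eq_Suc)
     apply arith
    apply (subgoal_tac "\<exists>j. k = j+4")
     apply (clarsimp simp: field_simps numeral_eq_Suc)
    apply (rule_tac x="k-4" in exI)
    apply simp
    done
qed

end
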